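(* For every alphabet $\Sigma$, $\mathrm{RevL}(\mathbb{F}_2,\Sigma)$ equals the Boolean closure of $\mathrm{RevL}(\mathbb{B},\Sigma)$, i.e., the smallest set of languages over $\Sigma$ containing $\mathrm{RevL}(\mathbb{B},\Sigma)$ and closed under complementation in $\Sigma^*$, finite unions and finite intersections. In other words, the class $\mathrm{RevL}(\mathbb{F}_2)$ is the Boolean closure of $\mathrm{RevL}(\mathbb{B})$.
   Context: $\mathbb{F}_2$ is the two-element field and $\mathbb{B}=(\{0,1\},\lor,\land,0,1)$ the Boolean semiring. For a semiring $S$ and finite nonempty alphabet $\Sigma$, a series is a map $r\colon\Sigma^*\to S$ with value $(r,w)$ and support $\mathrm{supp}(r)=\{w\mid(r,w)\neq0\}$. A weighted automaton over $S$ and $\Sigma$ is $\mathcal{A}=(Q,\sigma,\iota,\tau)$ with $Q$ finite, $\sigma\colon Q\times\Sigma\times Q\to S$, $\iota,\tau\colon Q\to S$; a run on $w=a_1\cdots a_t$ is $q_0a_1q_1\cdots a_tq_t$ with all $\sigma(q_{k-1},a_k,q_k)\neq0$, of weight $\iota(q_0)\sigma(q_0,a_1,q_1)\cdots\sigma(q_{t-1},a_t,q_t)\tau(q_t)$, and $(\|\mathcal{A}\|,w)$ is the sum of weights of all runs on $w$. $\mathcal{A}$ is reversible if for all $p,p',q,q'\in Q$, $a\in\Sigma$: $\sigma(p,a,q)\neq0\neq\sigma(p,a,q')$ implies $q=q'$, and $\sigma(p,a,q)\neq0\neq\sigma(p',a,q)$ implies $p=p'$. $\mathrm{RevL}(S,\Sigma)$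 is the set of supports of series realised by reversible weighted automata over $S$ and $\Sigma$, and $\mathrm{RevL}(S)$ the class of all such languages over all alphabets. $\mathrm{RevL}(\mathbb{B},\Sigma)$ is exactly the set of languages recognised by reversible finite automata in the sense of Pin (transition relation deterministic and codeterministic, arbitrary sets of initial and final states). *)

theory Defs
  imports Main "HOL-Library.Z2"
begin

datatype boolsr = BFalse | BTrue

instantiation boolsr :: comm_semiring_1
begin
definition zero_boolsr :: boolsr where "zero_boolsr = BFalse"
definition one_boolsr :: boolsr where "one_boolsr = BTrue"
fun plus_boolsr :: "boolsr \<Rightarrow> boolsr \<Rightarrow> boolsr" where
  "plus_boolsr BFalse y = y"
| "plus_boolsr BTrue y = BTrue"
fun times_boolsr :: "boolsr \<Rightarrow> boolsr \<Rightarrow> boolsr" where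
  "times_boolsr BFalse y = BFalse"
| "times_boolsr BTrue y = y"
instance
proof
  fix a b c :: boolsr
  show "a + b + c = a + (b + c)" by (cases a; cases b; cases c) auto
  show "a + b = b + a" by (cases a; cases b) auto
  show "0 + a = a" by (simp add: zero_boolsr_def)
  show "a * b * c = a * (b * c)" by (cases a; cases b; cases c) auto
  show "a * b = b * a" by (cases a; cases b) auto
  show "1 * a = a" by (simp add: one_boolsr_def)
  show "(a + b) * c = a * c + b * c" by (cases a; cases b; cases c) auto
  show "0 * a = 0" by (simp add: zero_boolsr_def)
  show "a * 0 = 0" by (cases a) (auto simp: zero_boolsr_def)
  show "(0::boolsr) \<noteq> 1" by (simp add: zero_boolsr_def one_boolsr_def)
qed
end

text \<open>A weighted automaton over semiring 's and alphabet 'a (the alphabet is the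
  whole finite type 'a). The finite state set is a finite set of naturals
  (every finite state set is in bijection with one). The weights of
  sigma, iota, tau outside the state set are irrelevant.\<close>

record ('a, 's) wautomaton =
  states :: "nat set"
  trans  :: "nat \<Rightarrow> 'a \<Rightarrow> nat \<Rightarrow> 's"
  init   :: "nat \<Rightarrow> 's"
  fin    :: "nat \<Rightarrow> 's"

definition wa_ok :: "('a, 's) wautomaton \<Rightarrow> bool" where
  "wa_ok A \<longleftrightarrow> finite (states A)"

definition runs :: "('a, 's::zero) wautomaton \<Rightarrow> 'a list \<Rightarrow> nat list set" where
  "runs A w = {qs. length qs = Suc (length w) \<and> set qs \<subseteq> states A \<and>
      (\<forall>k < length w. trans A (qs ! k) (w ! k) (qs ! Suc k) \<noteq> 0)}"

fun trans_weight :: "('a, 's::semiring_1) wautomaton \<Rightarrow> nat list \<Rightarrow> 'a list \<Rightarrow> 's" where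
  "trans_weight A [q] [] = fin A q"
| "trans_weight A (p # q # qs) (a # w) = trans A p a q * trans_weight A (q # qs) w"
| "trans_weight A _ _ = 0"

definition run_weight :: "('a, 's::semiring_1) wautomaton \<Rightarrow> nat list \<Rightarrow> 'a list \<Rightarrow> 's" where
  "run_weight A qs w = init A (hd qs) * trans_weight A qs w"

definition behaviour :: "('a, 's::semiring_1) wautomaton \<Rightarrow> 'a list \<Rightarrow> 's" where
  "behaviour A w = (\<Sum>qs \<in> runs A w. run_weight A qs w)"

definition supp :: "('a list \<Rightarrow> 's::zero) \<Rightarrow> 'a list set" where
  "supp r = {w. r w \<noteq> 0}"

definition reversible :: "('a, 's::zero) wautomaton \<Rightarrow> bool" where
  "reversible A \<longleftrightarrow>
     (\<forall>p \<in> states A. \<forall>q \<in> states A. \<forall>q' \<in> states A. \<forall>a.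
        trans A p a q \<noteq> 0 \<and> trans A p a q' \<noteq> 0 \<longrightarrow> q = q') \<and>
     (\<forall>p \<in> states A. \<forall>p' \<in> states A. \<forall>q \<in> states A. \<forall>a.
        trans A p a q \<noteq> 0 \<and> trans A p' a q \<noteq> 0 \<longrightarrow> p = p')"

text \<open>RevL(S, Sigma), where Sigma = UNIV :: 'a set and S is the type 's.\<close>

definition RevL :: "'s::semiring_1 itself \<Rightarrow> 'a list set set" where
  "RevL _ = {supp (behaviour A) | A :: ('a, 's) wautomaton. wa_ok A \<and> reversible A}"

definition bool_closed :: "'a list set set \<Rightarrow> bool" where
  "bool_closed C \<longleftrightarrow>
     (\<forall>L \<in> C. - L \<in> C) \<and>
     (\<forall>F. finite F \<and> F \<subseteq> C \<longrightarrow> \<Union>F \<in> C) \<and>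
     (\<forall>F. finite F \<and> F \<subseteq> C \<longrightarrow> \<Inter>F \<in> C)"

definition bool_closure :: "'a list set set \<Rightarrow> 'a list set set" where
  "bool_closure K = \<Inter>{C. K \<subseteq> C \<and> bool_closed C}"

end

theory Submission
  imports Defs "HOL-Library.Nat_Bijection"
begin


definition bruns :: "nat set \<Rightarrow> (nat \<Rightarrow> 'a \<Rightarrow> nat \<Rightarrow> bool) \<Rightarrow> 'a list \<Rightarrow> nat list set" where
  "bruns Q T w = {qs. length qs = Suc (length w) \<and> set qs \<subseteq> Q \<and>
      (\<forall>k < length w. T (qs ! k) (w ! k) (qs ! Suc k))}"

definition GR :: "nat set \<Rightarrow> (nat \<Rightarrow> 'a \<Rightarrow> nat \<Rightarrow> bool) \<Rightarrow> (nat \<Rightarrow> bool) \<Rightarrow> (nat \<Rightarrow> bool) \<Rightarrow> 'a list \<Rightarrow> nat list set" where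
  "GR Q T I F w = {qs \<in> bruns Q T w. I (qs ! 0) \<and> F (qs ! length w)}"

definition brev :: "nat set \<Rightarrow> (nat \<Rightarrow> 'a \<Rightarrow> nat \<Rightarrow> bool) \<Rightarrow> bool" where
  "brev Q T \<longleftrightarrow>
     (\<forall>p \<in> Q. \<forall>q \<in> Q. \<forall>q' \<in> Q. \<forall>a. T p a q \<and> T p a q' \<longrightarrow> q = q') \<and>
     (\<forall>p \<in> Q. \<forall>p' \<in> Q. \<forall>q \<in> Q. \<forall>a. T p a q \<and> T p' a q \<longrightarrow> p = p')"

definition LF where "LF Q T I F = {w. odd (card (GR Q T I F w))}"
definition LB where "LB Q T I F = {w. GR Q T I F w \<noteq> {}}"

definition mk :: "nat set \<Rightarrow> (nat \<Rightarrow> 'a \<Rightarrow> nat \<Rightarrow> bool) \<Rightarrow> (nat \<Rightarrow> bool) \<Rightarrow> (nat \<Rightarrow> bool) \<Rightarrow> ('a, 's::zero_neq_one) wautomaton" where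
  "mk Q T I F = \<lparr>states = Q, trans = \<lambda>p a q. if T p a q then 1 else 0,
     init = \<lambda>q. if I q then 1 else 0, fin = \<lambda>q. if F q then 1 else 0\<rparr>"

lemma finite_bruns: "finite Q \<Longrightarrow> finite (bruns Q T w)"
  by (rule finite_subset[OF _ finite_lists_length_eq[of Q "Suc (length w)"]]) (auto simp: bruns_def)

lemma finite_GR: "finite Q \<Longrightarrow> finite (GR Q T I F w)"
  unfolding GR_def by (rule finite_subset[OF _ finite_bruns]) auto

lemma runs_eq: "runs A w = bruns (states A) (\<lambda>p a q. trans A p a q \<noteq> 0) w"
  by (simp add: runs_def bruns_def)

lemma tw:
  fixes A :: "('a, 's::semiring_1) wautomaton"
  assumes one: "\<forall>x::'s. x \<noteq> 0 \<longrightarrow> x = 1"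
  shows "qs \<in> runs A w \<Longrightarrow> trans_weight A qs w = fin A (qs ! length w)"
proof (induction w arbitrary: qs)
  case Nil
  then obtain q where "qs = [q]" by (cases qs) (auto simp: runs_def)
  then show ?case by simp
next
  case (Cons a w)
  then obtain p q r where qs: "qs = p # q # r"
    by (cases qs; cases "tl qs") (auto simp: runs_def)
  have t: "trans A p a q \<noteq> 0" using Cons.prems qs by (force simp: runs_def)
  have rq: "q # r \<in> runs A w"
  proof -
    have "\<forall>k<length w. trans A ((q#r) ! k) (w ! k) ((q#r) ! Suc k) \<noteq> 0"
    proof (intro allI impI)
      fix k assume "k < length w"
      then have "trans A (qs ! Suc k) ((a#w) ! Suc k) (qs ! Suc (Suc k)) \<noteq> 0"
        using Cons.prems by (auto simp: runs_def)
      then show "trans A ((q#r) ! k) (w ! k) ((q#r) ! Suc k) \<noteq> 0" by (simp add: qs)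
    qed
    then show ?thesis using Cons.prems qs by (auto simp: runs_def)
  qed
  have "trans A p a q = 1" using one t by blast
  with Cons.IH[OF rq] qs show ?case by simp
qed

lemma beh:
  fixes A :: "('a, 's::semiring_1) wautomaton"
  assumes one: "\<forall>x::'s. x \<noteq> 0 \<longrightarrow> x = 1"
  shows "behaviour A w = (\<Sum>qs\<in>runs A w. init A (qs ! 0) * fin A (qs ! length w))"
  unfolding behaviour_def run_weight_def
proof (rule sum.cong[OF refl])
  fix qs assume qs: "qs \<in> runs A w"
  then have "qs \<noteq> []" by (auto simp: runs_def)
  then show "init A (hd qs) * trans_weight A qs w = init A (qs ! 0) * fin A (qs ! length w)"
    using tw[OF one qs] by (simp add: hd_conv_nth)
qed

lemma sum_bit: "finite S \<Longrightarrow> (\<Sum>x\<in>S. if P x then 1 else (0::bit)) = (if odd (card {x\<in>S. P x}) then 1 else 0)"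
proof (induction S rule: finite_induct)
  case (insert x S)
  have "{y \<in> insert x S. P y} = (if P x then insert x {y\<in>S. P y} else {y\<in>S. P y})" by auto
  then show ?case using insert by (auto simp: card_insert_if)
qed simp

lemma sum_bool: "finite S \<Longrightarrow> (\<Sum>x\<in>S. if P x then 1 else (0::boolsr)) = (if \<exists>x\<in>S. P x then 1 else 0)"
proof (induction S rule: finite_induct)
  case (insert x S)
  then show ?case by (auto simp: one_boolsr_def zero_boolsr_def)
qed simp

lemma bit_mult: "(x::bit) * y = (if x \<noteq> 0 \<and> y \<noteq> 0 then 1 else 0)"
  by (cases x; cases y) auto

lemma bool_mult: "(x::boolsr) * y = (if x \<noteq> 0 \<and> y \<noteq> 0 then 1 else 0)"
  by (cases x; cases y) (auto simp: one_boolsr_def zero_boolsr_def)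

lemma bool_one: "\<forall>x::boolsr. x \<noteq> 0 \<longrightarrow> x = 1"
proof (intro allI impI)
  fix x :: boolsr assume "x \<noteq> 0" then show "x = 1"
    by (cases x) (auto simp: one_boolsr_def zero_boolsr_def)
qed

lemma bit_one: "\<forall>x::bit. x \<noteq> 0 \<longrightarrow> x = 1" by simp

lemma supp_bit:
  fixes A :: "('a, bit) wautomaton"
  assumes "finite (states A)"
  shows "supp (behaviour A) = LF (states A) (\<lambda>p a q. trans A p a q \<noteq> 0) (\<lambda>q. init A q \<noteq> 0) (\<lambda>q. fin A q \<noteq> 0)"
proof -
  have "behaviour A w = (if w \<in> LF (states A) (\<lambda>p a q. trans A p a q \<noteq> 0) (\<lambda>q. init A q \<noteq> 0) (\<lambda>q. fin A q \<noteq> 0) then 1 else 0)" for w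
    unfolding beh[OF bit_one] bit_mult[of "init A _"] LF_def GR_def runs_eq
    using sum_bit[OF finite_bruns[OF assms, of "\<lambda>p a q. trans A p a q \<noteq> 0" w], of "\<lambda>qs. init A (qs!0) \<noteq> 0 \<and> fin A (qs ! length w) \<noteq> 0"]
    by (simp del: bit_not_zero_iff)
  then show ?thesis unfolding supp_def by auto
qed

lemma supp_bool:
  fixes A :: "('a, boolsr) wautomaton"
  assumes "finite (states A)"
  shows "supp (behaviour A) = LB (states A) (\<lambda>p a q. trans A p a q \<noteq> 0) (\<lambda>q. init A q \<noteq> 0) (\<lambda>q. fin A q \<noteq> 0)"
proof -
  have "behaviour A w = (if w \<in> LB (states A) (\<lambda>p a q. trans A p a q \<noteq> 0) (\<lambda>q. init A q \<noteq> 0) (\<lambda>q. fin A q \<noteq> 0) then 1 else 0)" for w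
    unfolding beh[OF bool_one] bool_mult[of "init A _"] LB_def GR_def runs_eq
    using sum_bool[OF finite_bruns[OF assms, of "\<lambda>p a q. trans A p a q \<noteq> 0" w], of "\<lambda>qs. init A (qs!0) \<noteq> 0 \<and> fin A (qs ! length w) \<noteq> 0"]
    by auto
  then show ?thesis unfolding supp_def by (auto simp: one_boolsr_def zero_boolsr_def)
qed

lemma rev_eq: "reversible A = brev (states A) (\<lambda>p a q. trans A p a q \<noteq> 0)"
  by (simp add: reversible_def brev_def)

lemma mk_simps: "states (mk Q T I F) = Q"
  "(\<lambda>p a q. trans (mk Q T I F :: ('a,'s::zero_neq_one) wautomaton) p a q \<noteq> 0) = T"
  "(\<lambda>q. init (mk Q T I F :: ('a,'s::zero_neq_one) wautomaton) q \<noteq> 0) = I"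
  "(\<lambda>q. fin (mk Q T I F :: ('a,'s::zero_neq_one) wautomaton) q \<noteq> 0) = F"
  by (auto simp: mk_def)

lemma FC: "RevL TYPE(bit) = {LF Q T I F | Q T I F. finite Q \<and> brev Q T}"
proof (rule set_eqI, rule iffI)
  fix L :: "'a list set" assume "L \<in> RevL TYPE(bit)"
  then obtain A :: "('a, bit) wautomaton" where "wa_ok A" "reversible A" "L = supp (behaviour A)"
    unfolding RevL_def by auto
  then show "L \<in> {LF Q T I F | Q T I F. finite Q \<and> brev Q T}"
    using supp_bit rev_eq unfolding wa_ok_def by blast
next
  fix L :: "'a list set" assume "L \<in> {LF Q T I F | Q T I F. finite Q \<and> brev Q T}"
  then obtain Q T I F where "finite Q" "brev Q T" "L = LF Q T I F" by auto
  then have "wa_ok (mk Q T I F :: ('a, bit) wautomaton) \<and> reversible (mk Q T I F :: ('a, bit) wautomaton)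
     \<and> L = supp (behaviour (mk Q T I F :: ('a, bit) wautomaton))"
    using supp_bit[of "mk Q T I F :: ('a, bit) wautomaton", unfolded mk_simps]
      rev_eq[of "mk Q T I F :: ('a, bit) wautomaton", unfolded mk_simps]
    by (simp add: wa_ok_def mk_simps(1))
  then show "L \<in> RevL TYPE(bit)" unfolding RevL_def by blast
qed

lemma BC: "RevL TYPE(boolsr) = {LB Q T I F | Q T I F. finite Q \<and> brev Q T}"
proof (rule set_eqI, rule iffI)
  fix L :: "'a list set" assume "L \<in> RevL TYPE(boolsr)"
  then obtain A :: "('a, boolsr) wautomaton" where "wa_ok A" "reversible A" "L = supp (behaviour A)"
    unfolding RevL_def by auto
  then show "L \<in> {LB Q T I F | Q T I F. finite Q \<and> brev Q T}"
    using supp_bool rev_eq unfolding wa_ok_def by blast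
next
  fix L :: "'a list set" assume "L \<in> {LB Q T I F | Q T I F. finite Q \<and> brev Q T}"
  then obtain Q T I F where "finite Q" "brev Q T" "L = LB Q T I F" by auto
  then have "wa_ok (mk Q T I F :: ('a, boolsr) wautomaton) \<and> reversible (mk Q T I F :: ('a, boolsr) wautomaton)
     \<and> L = supp (behaviour (mk Q T I F :: ('a, boolsr) wautomaton))"
    using supp_bool[of "mk Q T I F :: ('a, boolsr) wautomaton", unfolded mk_simps]
      rev_eq[of "mk Q T I F :: ('a, boolsr) wautomaton", unfolded mk_simps]
    by (simp add: wa_ok_def mk_simps(1))
  then show "L \<in> RevL TYPE(boolsr)" unfolding RevL_def by blast
qed



lemma bruns_mem: "qs \<in> bruns Q T w \<Longrightarrow> k \<le> length w \<Longrightarrow> qs ! k \<in> Q"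
  unfolding bruns_def by (auto intro: nth_mem[THEN subsetD[rotated]] )

lemma det:
  assumes r: "brev Q T" and a: "qs \<in> bruns Q T w" and b: "qs' \<in> bruns Q T w" and h: "qs ! 0 = qs' ! 0"
  shows "qs = qs'"
proof -
  have "\<forall>k. k \<le> length w \<longrightarrow> qs ! k = qs' ! k"
  proof (intro allI)
    fix k show "k \<le> length w \<longrightarrow> qs ! k = qs' ! k"
    proof (induction k)
      case 0 then show ?case using h by simp
    next
      case (Suc k)
      show ?case
      proof
        assume k: "Suc k \<le> length w"
        then have e: "qs ! k = qs' ! k" using Suc by simp
        have t1: "T (qs ! k) (w ! k) (qs ! Suc k)" and t2: "T (qs' ! k) (w ! k) (qs' ! Suc k)"
          using a b k by (auto simp: bruns_def)
        have "qs ! k \<in> Q" "qs ! Suc k \<in> Q" "qs' ! Suc k \<in> Q"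
          using bruns_mem[OF a] bruns_mem[OF b] k by auto
        then show "qs ! Suc k = qs' ! Suc k" using r t1 t2 e unfolding brev_def by metis
      qed
    qed
  qed
  moreover have "length qs = Suc (length w)" "length qs' = Suc (length w)"
    using a b by (auto simp: bruns_def)
  ultimately show ?thesis by (intro nth_equalityI) auto
qed

lemma single:
  assumes r: "brev Q T"
  shows "odd (card (GR Q T (\<lambda>x. x = q) F w)) \<longleftrightarrow> GR Q T (\<lambda>x. x = q) F w \<noteq> {}"
proof
  assume "odd (card (GR Q T (\<lambda>x. x = q) F w))"
  then show "GR Q T (\<lambda>x. x = q) F w \<noteq> {}" by (auto)
next
  assume "GR Q T (\<lambda>x. x = q) F w \<noteq> {}"
  then obtain qs where qs: "qs \<in> GR Q T (\<lambda>x. x = q) F w" by auto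
  have "GR Q T (\<lambda>x. x = q) F w = {qs}"
  proof (rule set_eqI, rule iffI)
    fix qs' assume "qs' \<in> GR Q T (\<lambda>x. x = q) F w"
    then show "qs' \<in> {qs}" using det[OF r, of qs' w qs] qs by (auto simp: GR_def)
  qed (use qs in auto)
  then show "odd (card (GR Q T (\<lambda>x. x = q) F w))" by simp
qed

lemma LF_single: "brev Q T \<Longrightarrow> LF Q T (\<lambda>x. x = q) F = LB Q T (\<lambda>x. x = q) F"
  unfolding LF_def LB_def using single by blast

lemma LB_union:
  assumes r: "brev Q T"
  shows "LB Q T I F = (\<Union>q \<in> {q\<in>Q. I q}. LF Q T (\<lambda>x. x = q) F)"
proof -
  have "w \<in> LB Q T I F \<longleftrightarrow> (\<exists>q\<in>Q. I q \<and> w \<in> LB Q T (\<lambda>x. x = q) F)" for w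
  proof
    assume "w \<in> LB Q T I F"
    then obtain qs where qs: "qs \<in> GR Q T I F w" by (auto simp: LB_def)
    then have "qs ! 0 \<in> Q" using bruns_mem[of qs Q T w 0] by (auto simp: GR_def)
    then show "\<exists>q\<in>Q. I q \<and> w \<in> LB Q T (\<lambda>x. x = q) F"
      using qs by (auto simp: LB_def GR_def)
  qed (auto simp: LB_def GR_def)
  then show ?thesis using LF_single[OF r] by auto
qed

lemma LF_parity:
  assumes r: "brev Q T" and fin: "finite Q"
  shows "LF Q T I F = {w. odd (card {q\<in>{q\<in>Q. I q}. w \<in> LB Q T (\<lambda>x. x = q) F})}"
proof -
  have "card (GR Q T I F w) = card {q\<in>{q\<in>Q. I q}. w \<in> LB Q T (\<lambda>x. x = q) F}" for w
  proof -
    have inj: "inj_on (\<lambda>qs. qs ! 0) (GR Q T I F w)"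
      proof (rule inj_onI)
      fix x y assume "x \<in> GR Q T I F w" "y \<in> GR Q T I F w" "x ! 0 = y ! 0"
      then show "x = y" using det[OF r, of x w y] by (auto simp: GR_def)
    qed
    have "(\<lambda>qs. qs ! 0) ` GR Q T I F w = {q\<in>{q\<in>Q. I q}. w \<in> LB Q T (\<lambda>x. x = q) F}"
    proof (rule set_eqI, rule iffI)
      fix q assume "q \<in> (\<lambda>qs. qs ! 0) ` GR Q T I F w"
      then obtain qs where qs: "qs \<in> GR Q T I F w" "q = qs ! 0" by auto
      then have "qs ! 0 \<in> Q" using bruns_mem[of qs Q T w 0] by (auto simp: GR_def)
      then show "q \<in> {q\<in>{q\<in>Q. I q}. w \<in> LB Q T (\<lambda>x. x = q) F}"
        using qs by (auto simp: LB_def GR_def)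
    next
      fix q assume "q \<in> {q\<in>{q\<in>Q. I q}. w \<in> LB Q T (\<lambda>x. x = q) F}"
      then obtain qs where "qs \<in> GR Q T (\<lambda>x. x = q) F w" "I q" by (auto simp: LB_def)
      then show "q \<in> (\<lambda>qs. qs ! 0) ` GR Q T I F w"
        by (auto simp: GR_def intro!: image_eqI[of _ _ qs])
    qed
    then show ?thesis using card_image[OF inj] by simp
  qed
  then show ?thesis unfolding LF_def by simp
qed

lemma bc_parts: assumes "bool_closed C"
  shows "\<forall>L \<in> C. - L \<in> C" "\<And>F. finite F \<Longrightarrow> F \<subseteq> C \<Longrightarrow> \<Union>F \<in> C"
    "\<And>F. finite F \<Longrightarrow> F \<subseteq> C \<Longrightarrow> \<Inter>F \<in> C"
  using assms unfolding bool_closed_def by simp_all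

lemma bc_compl: "bool_closed C \<Longrightarrow> X \<in> C \<Longrightarrow> - X \<in> C"
  using bc_parts(1) by blast

lemma bc_un: "bool_closed C \<Longrightarrow> X \<in> C \<Longrightarrow> Y \<in> C \<Longrightarrow> X \<union> Y \<in> C"
proof -
  assume C: "bool_closed C" and "X \<in> C" "Y \<in> C"
  then have "\<Union>{X, Y} \<in> C" by (intro bc_parts(2)) auto
  then show ?thesis by simp
qed

lemma bc_int: "bool_closed C \<Longrightarrow> X \<in> C \<Longrightarrow> Y \<in> C \<Longrightarrow> X \<inter> Y \<in> C"
proof -
  assume C: "bool_closed C" and X: "X \<in> C" and Y: "Y \<in> C"
  have "- (- X \<union> - Y) \<in> C" by (rule bc_compl[OF C bc_un[OF C bc_compl[OF C X] bc_compl[OF C Y]]])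
  then show ?thesis by simp
qed

lemma bc_par:
  assumes C: "bool_closed C" and J: "finite J"
  shows "(\<forall>q\<in>J. L q \<in> C) \<Longrightarrow> {w. odd (card {q\<in>J. w \<in> L q})} \<in> C"
  using J
proof (induction J rule: finite_induct)
  case empty
  have "\<Union>{} \<in> C" using bc_parts(2)[OF C] by blast
  then show ?case by simp
next
  case (insert x J)
  let ?S = "{w. odd (card {q\<in>J. w \<in> L q})}"
  have S: "?S \<in> C" and Lx: "L x \<in> C" using insert by auto
  have "{w. odd (card {q\<in>insert x J. w \<in> L q})} = (?S \<inter> - L x) \<union> (- ?S \<inter> L x)"
  proof -
    have "card {q\<in>insert x J. w \<in> L q} = (if w \<in> L x then Suc (card {q\<in>J. w \<in> L q}) else card {q\<in>J. w \<in> L q})" for w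
    proof -
      have "{q\<in>insert x J. w \<in> L q} = (if w \<in> L x then insert x {q\<in>J. w \<in> L q} else {q\<in>J. w \<in> L q})" by auto
      then show ?thesis using insert.hyps by simp
    qed
    then show ?thesis by auto
  qed
  moreover have "(?S \<inter> - L x) \<union> (- ?S \<inter> L x) \<in> C"
    using bc_un[OF C bc_int[OF C S bc_compl[OF C Lx]] bc_int[OF C bc_compl[OF C S] Lx]] .
  ultimately show ?case by simp
qed

lemma closure_sup: "K \<subseteq> bool_closure K"
  unfolding bool_closure_def by (rule Inter_greatest) simp

lemma closure_closed: "bool_closed (bool_closure K)"
proof -
  let ?S = "{C. K \<subseteq> C \<and> bool_closed C}"
  have 1: "- L \<in> \<Inter>?S" if "L \<in> \<Inter>?S" for L
  proof (rule InterI)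
    fix C assume "C \<in> ?S"
    then show "- L \<in> C" using that bc_compl[of C L] by blast
  qed
  have 2: "\<Union>F \<in> \<Inter>?S" if "finite F" "F \<subseteq> \<Inter>?S" for F
  proof (rule InterI)
    fix C assume C: "C \<in> ?S"
    then have "F \<subseteq> C" using that by blast
    then show "\<Union>F \<in> C" using C that(1) bc_parts(2) by blast
  qed
  have 3: "\<Inter>F \<in> \<Inter>?S" if "finite F" "F \<subseteq> \<Inter>?S" for F
  proof (rule InterI)
    fix C assume C: "C \<in> ?S"
    then have "F \<subseteq> C" using that by blast
    then show "\<Inter>F \<in> C" using C that(1) bc_parts(3) by blast
  qed
  have "bool_closed (\<Inter>?S)" unfolding bool_closed_def[of "\<Inter>?S"]
  proof (intro conjI allI impI ballI)
    fix L assume "L \<in> \<Inter>?S" then show "- L \<in> \<Inter>?S" by (rule 1)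
  next
    fix F assume "finite F \<and> F \<subseteq> \<Inter>?S" then show "\<Union>F \<in> \<Inter>?S" using 2 by blast
  next
    fix F assume "finite F \<and> F \<subseteq> \<Inter>?S" then show "\<Inter>F \<in> \<Inter>?S" using 3 by blast
  qed
  then show ?thesis unfolding bool_closure_def .
qed

lemma closure_min: "K \<subseteq> C \<Longrightarrow> bool_closed C \<Longrightarrow> bool_closure K \<subseteq> C"
  unfolding bool_closure_def by (rule Inter_lower) simp



lemma bruns_iff: "qs \<in> bruns Q T w \<longleftrightarrow> length qs = Suc (length w) \<and> (\<forall>k\<le>length w. qs ! k \<in> Q)
   \<and> (\<forall>k<length w. T (qs ! k) (w ! k) (qs ! Suc k))"
proof -
  have "length qs = Suc (length w) \<Longrightarrow> set qs \<subseteq> Q \<longleftrightarrow> (\<forall>k\<le>length w. qs ! k \<in> Q)"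
    by (auto simp: set_conv_nth less_Suc_eq_le)
  then show ?thesis unfolding bruns_def by auto
qed

lemma GR_iff: "qs \<in> GR Q T I F w \<longleftrightarrow> length qs = Suc (length w) \<and> (\<forall>k\<le>length w. qs ! k \<in> Q)
   \<and> (\<forall>k<length w. T (qs ! k) (w ! k) (qs ! Suc k)) \<and> I (qs ! 0) \<and> F (qs ! length w)"
  unfolding GR_def bruns_iff by auto

lemma compl_GR:
  fixes Q :: "nat set" and T :: "nat \<Rightarrow> 'a \<Rightarrow> nat \<Rightarrow> bool" and I F :: "nat \<Rightarrow> bool"
  defines "Q' \<equiv> insert 0 (Suc ` Q)"
    and "T' \<equiv> \<lambda>p a q. (p = 0 \<and> q = 0) \<or> (p \<noteq> 0 \<and> q \<noteq> 0 \<and> T (p - 1) a (q - 1))"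
    and "I' \<equiv> \<lambda>q. q = 0 \<or> I (q - 1)"
    and "F' \<equiv> \<lambda>q. q = 0 \<or> F (q - 1)"
  shows "GR Q' T' I' F' w = insert (replicate (Suc (length w)) 0) (map Suc ` GR Q T I F w)"
proof (rule set_eqI, rule iffI)
  fix qs assume qs: "qs \<in> GR Q' T' I' F' w"
  note q = qs[unfolded GR_iff]
  show "qs \<in> insert (replicate (Suc (length w)) 0) (map Suc ` GR Q T I F w)"
  proof (cases "qs ! 0 = 0")
    case True
    have "\<forall>k. k \<le> length w \<longrightarrow> qs ! k = 0"
    proof
      fix k show "k \<le> length w \<longrightarrow> qs ! k = 0"
      proof (induction k)
        case (Suc k)
        show ?case
        proof
          assume "Suc k \<le> length w"
          then have "k < length w" by simp
          then have "T' (qs ! k) (w ! k) (qs ! Suc k)" using q by blast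
          with Suc \<open>Suc k \<le> length w\<close> show "qs ! Suc k = 0" by (auto simp: T'_def)
        qed
      qed (use True in simp)
    qed
    then have "qs = replicate (Suc (length w)) 0" using q by (intro nth_equalityI) (auto simp del: replicate_Suc)
    then show ?thesis by simp
  next
    case False
    have nz: "\<forall>k. k \<le> length w \<longrightarrow> qs ! k \<noteq> 0"
    proof
      fix k show "k \<le> length w \<longrightarrow> qs ! k \<noteq> 0"
      proof (induction k)
        case (Suc k)
        show ?case
        proof
          assume "Suc k \<le> length w"
          then have "k < length w" by simp
          then have "T' (qs ! k) (w ! k) (qs ! Suc k)" using q by blast
          with Suc \<open>Suc k \<le> length w\<close> show "qs ! Suc k \<noteq> 0" by (auto simp: T'_def)
        qed
      qed (use False in simp)
    qed
    let ?ps = "map (\<lambda>x. x - 1) qs"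
    have e: "qs = map Suc ?ps" using q nz by (intro nth_equalityI) auto
    have "?ps \<in> GR Q T I F w"
      unfolding GR_iff
    proof (intro conjI allI impI)
      show "length ?ps = Suc (length w)" using q by simp
    next
      fix k assume k: "k \<le> length w"
      then have "qs ! k \<in> Q'" "qs ! k \<noteq> 0" using q nz by auto
      then show "?ps ! k \<in> Q" using q k by (auto simp: Q'_def)
    next
      fix k assume k: "k < length w"
      then have "T' (qs ! k) (w ! k) (qs ! Suc k)" "qs ! k \<noteq> 0" using q nz by auto
      then show "T (?ps ! k) (w ! k) (?ps ! Suc k)" using q k by (auto simp: T'_def)
    next
      show "I (?ps ! 0)" using q False by (auto simp: I'_def)
    next
      show "F (?ps ! length w)" using q nz by (auto simp: F'_def)
    qed
    then show ?thesis using e by blast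
  qed
next
  fix qs assume "qs \<in> insert (replicate (Suc (length w)) 0) (map Suc ` GR Q T I F w)"
  then consider "qs = replicate (Suc (length w)) 0" | ps where "ps \<in> GR Q T I F w" "qs = map Suc ps"
    by auto
  then show "qs \<in> GR Q' T' I' F' w"
  proof cases
    case 1 then show ?thesis by (auto simp: GR_iff Q'_def T'_def I'_def F'_def simp del: replicate_Suc)
  next
    case (2 ps)
    then show ?thesis by (auto simp: GR_iff Q'_def T'_def I'_def F'_def)
  qed
qed

lemma compl_F:
  fixes T :: "nat \<Rightarrow> 'a \<Rightarrow> nat \<Rightarrow> bool"
  assumes fin: "finite Q" and r: "brev Q T"
  shows "\<exists>Q' (T' :: nat \<Rightarrow> 'a \<Rightarrow> nat \<Rightarrow> bool) I' F'. finite Q' \<and> brev Q' T' \<and> LF Q' T' I' F' = - LF Q T I F"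
proof (intro exI conjI)
  let ?Q' = "insert 0 (Suc ` Q)"
  let ?T' = "\<lambda>p a q. (p = 0 \<and> q = 0) \<or> (p \<noteq> 0 \<and> q \<noteq> 0 \<and> T (p - 1) a (q - 1))"
  let ?I' = "\<lambda>q. q = 0 \<or> I (q - 1)"
  let ?F' = "\<lambda>q. q = 0 \<or> F (q - 1)"
  show "finite ?Q'" using fin by simp
  show "brev ?Q' ?T'"
    using r unfolding brev_def by (auto 0 3)
  show "LF ?Q' ?T' ?I' ?F' = - LF Q T I F"
  proof -
    have "card (GR ?Q' ?T' ?I' ?F' w) = Suc (card (GR Q T I F w))" for w
    proof -
      have nin: "replicate (Suc (length w)) 0 \<notin> map Suc ` GR Q T I F w" by auto
      have inj: "inj_on (map Suc) (GR Q T I F w)" by (auto intro!: inj_onI dest: map_injective)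
      show ?thesis unfolding compl_GR using nin card_image[OF inj]
        card_insert_disjoint[OF finite_imageI[OF finite_GR[OF fin]] nin] by simp
    qed
    then show ?thesis unfolding LF_def by auto
  qed
qed



lemma prod_GR:
  fixes Q1 Q2 :: "nat set" and T1 T2 :: "nat \<Rightarrow> 'a \<Rightarrow> nat \<Rightarrow> bool" and I1 I2 F1 F2 :: "nat \<Rightarrow> bool"
  defines "Q' \<equiv> prod_encode ` (Q1 \<times> Q2)"
    and "T' \<equiv> \<lambda>x a y. T1 (fst (prod_decode x)) a (fst (prod_decode y)) \<and> T2 (snd (prod_decode x)) a (snd (prod_decode y))"
    and "I' \<equiv> \<lambda>x. I1 (fst (prod_decode x)) \<and> I2 (snd (prod_decode x))"
    and "F' \<equiv> \<lambda>x. F1 (fst (prod_decode x)) \<and> F2 (snd (prod_decode x))"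
  shows "GR Q' T' I' F' w = (\<lambda>(ps, qs). map prod_encode (zip ps qs)) ` (GR Q1 T1 I1 F1 w \<times> GR Q2 T2 I2 F2 w)"
proof (rule set_eqI, rule iffI)
  fix rs assume rs: "rs \<in> GR Q' T' I' F' w"
  note r = rs[unfolded GR_iff]
  let ?ps = "map (\<lambda>x. fst (prod_decode x)) rs"
  let ?qs = "map (\<lambda>x. snd (prod_decode x)) rs"
  have e: "rs = map prod_encode (zip ?ps ?qs)" using r by (intro nth_equalityI) auto
  have mem: "fst (prod_decode (rs ! k)) \<in> Q1 \<and> snd (prod_decode (rs ! k)) \<in> Q2" if "k \<le> length w" for k
    using r that by (auto simp: Q'_def)
  have "?ps \<in> GR Q1 T1 I1 F1 w" unfolding GR_iff using r mem by (auto simp: T'_def I'_def F'_def)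
  moreover have "?qs \<in> GR Q2 T2 I2 F2 w" unfolding GR_iff using r mem by (auto simp: T'_def I'_def F'_def)
  ultimately show "rs \<in> (\<lambda>(ps, qs). map prod_encode (zip ps qs)) ` (GR Q1 T1 I1 F1 w \<times> GR Q2 T2 I2 F2 w)"
    by (intro image_eqI[where x="(?ps, ?qs)"]) (use e in auto)
next
  fix rs assume "rs \<in> (\<lambda>(ps, qs). map prod_encode (zip ps qs)) ` (GR Q1 T1 I1 F1 w \<times> GR Q2 T2 I2 F2 w)"
  then obtain ps qs where p: "ps \<in> GR Q1 T1 I1 F1 w" and q: "qs \<in> GR Q2 T2 I2 F2 w"
    and e: "rs = map prod_encode (zip ps qs)" by auto
  note p' = p[unfolded GR_iff] and q' = q[unfolded GR_iff]
  have nth: "rs ! k = prod_encode (ps ! k, qs ! k)" if "k \<le> length w" for k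
    using e p' q' that by simp
  show "rs \<in> GR Q' T' I' F' w" unfolding GR_iff
  proof (intro conjI allI impI)
    show "length rs = Suc (length w)" using e p' q' by simp
  next
    fix k assume "k \<le> length w" then show "rs ! k \<in> Q'" using nth p' q' by (auto simp: Q'_def)
  next
    fix k assume "k < length w" then show "T' (rs ! k) (w ! k) (rs ! Suc k)"
      using nth p' q' by (auto simp: T'_def)
  next
    show "I' (rs ! 0)" using nth p' q' by (auto simp: I'_def)
  next
    show "F' (rs ! length w)" using nth p' q' by (auto simp: F'_def)
  qed
qed

lemma prod_F:
  fixes T1 T2 :: "nat \<Rightarrow> 'a \<Rightarrow> nat \<Rightarrow> bool"
  assumes fin1: "finite Q1" and r1: "brev Q1 T1" and fin2: "finite Q2" and r2: "brev Q2 T2"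
  shows "\<exists>Q' (T' :: nat \<Rightarrow> 'a \<Rightarrow> nat \<Rightarrow> bool) I' F'. finite Q' \<and> brev Q' T' \<and>
     LF Q' T' I' F' = LF Q1 T1 I1 F1 \<inter> LF Q2 T2 I2 F2"
proof (intro exI conjI)
  let ?Q' = "prod_encode ` (Q1 \<times> Q2)"
  let ?T' = "\<lambda>x a y. T1 (fst (prod_decode x)) a (fst (prod_decode y)) \<and> T2 (snd (prod_decode x)) a (snd (prod_decode y))"
  let ?I' = "\<lambda>x. I1 (fst (prod_decode x)) \<and> I2 (snd (prod_decode x))"
  let ?F' = "\<lambda>x. F1 (fst (prod_decode x)) \<and> F2 (snd (prod_decode x))"
  show "finite ?Q'" using fin1 fin2 by simp
  show "brev ?Q' ?T'"
    unfolding brev_def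
  proof (intro conjI ballI allI impI)
    fix p q q' a assume "p \<in> ?Q'" "q \<in> ?Q'" "q' \<in> ?Q'" and t: "?T' p a q \<and> ?T' p a q'"
    then obtain p1 p2 u1 u2 v1 v2 where "p = prod_encode (p1, p2)" "q = prod_encode (u1, u2)" "q' = prod_encode (v1, v2)"
      "p1 \<in> Q1" "p2 \<in> Q2" "u1 \<in> Q1" "u2 \<in> Q2" "v1 \<in> Q1" "v2 \<in> Q2" by blast
    moreover have "u1 = v1" using r1 t calculation unfolding brev_def by simp blast
    moreover have "u2 = v2" using r2 t calculation unfolding brev_def by simp blast
    ultimately show "q = q'" by simp
  next
    fix p p' q a assume "p \<in> ?Q'" "p' \<in> ?Q'" "q \<in> ?Q'" and t: "?T' p a q \<and> ?T' p' a q"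
    then obtain p1 p2 u1 u2 v1 v2 where "p = prod_encode (p1, p2)" "p' = prod_encode (u1, u2)" "q = prod_encode (v1, v2)"
      "p1 \<in> Q1" "p2 \<in> Q2" "u1 \<in> Q1" "u2 \<in> Q2" "v1 \<in> Q1" "v2 \<in> Q2" by blast
    moreover have "p1 = u1" using r1 t calculation unfolding brev_def by simp blast
    moreover have "p2 = u2" using r2 t calculation unfolding brev_def by simp blast
    ultimately show "p = p'" by simp
  qed
  show "LF ?Q' ?T' ?I' ?F' = LF Q1 T1 I1 F1 \<inter> LF Q2 T2 I2 F2"
  proof -
    have "card (GR ?Q' ?T' ?I' ?F' w) = card (GR Q1 T1 I1 F1 w) * card (GR Q2 T2 I2 F2 w)" for w
    proof -
      have inj: "inj_on (\<lambda>(ps, qs). map prod_encode (zip ps qs)) (GR Q1 T1 I1 F1 w \<times> GR Q2 T2 I2 F2 w)"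
      proof (rule inj_onI, clarify)
        fix ps qs ps' qs'
        assume a: "ps \<in> GR Q1 T1 I1 F1 w" "qs \<in> GR Q2 T2 I2 F2 w" "ps' \<in> GR Q1 T1 I1 F1 w" "qs' \<in> GR Q2 T2 I2 F2 w"
          and e: "map prod_encode (zip ps qs) = map prod_encode (zip ps' qs')"
        have "map prod_decode (map prod_encode (zip ps qs)) = map prod_decode (map prod_encode (zip ps' qs'))"
          using e by simp
        then have z: "zip ps qs = zip ps' qs'" by (simp add: comp_def)
        have l: "length ps = length qs" "length ps' = length qs'" using a by (auto simp: GR_iff)
        have "map fst (zip ps qs) = map fst (zip ps' qs')" "map snd (zip ps qs) = map snd (zip ps' qs')"
          using z by simp_all
        then show "ps = ps' \<and> qs = qs'" using l by simp
      qed
      show ?thesis unfolding prod_GR card_image[OF inj] card_cartesian_product ..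
    qed
    then show ?thesis unfolding LF_def by auto
  qed
qed



lemma FC_I: "finite Q \<Longrightarrow> brev Q (T :: nat \<Rightarrow> 'a \<Rightarrow> nat \<Rightarrow> bool) \<Longrightarrow> LF Q T I F \<in> RevL TYPE(bit)"
  unfolding FC by (intro CollectI exI conjI) (rule refl)

lemma FC_E: "(L :: 'a list set) \<in> RevL TYPE(bit) \<Longrightarrow> (\<And>Q (T :: nat \<Rightarrow> 'a \<Rightarrow> nat \<Rightarrow> bool) I F. finite Q \<Longrightarrow> brev Q T \<Longrightarrow> L = LF Q T I F \<Longrightarrow> P) \<Longrightarrow> P"
  unfolding FC by auto

lemma BC_I: "finite Q \<Longrightarrow> brev Q (T :: nat \<Rightarrow> 'a \<Rightarrow> nat \<Rightarrow> bool) \<Longrightarrow> LB Q T I F \<in> RevL TYPE(boolsr)"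
  unfolding BC by (intro CollectI exI conjI) (rule refl)

lemma BC_E: "(L :: 'a list set) \<in> RevL TYPE(boolsr) \<Longrightarrow> (\<And>Q (T :: nat \<Rightarrow> 'a \<Rightarrow> nat \<Rightarrow> bool) I F. finite Q \<Longrightarrow> brev Q T \<Longrightarrow> L = LB Q T I F \<Longrightarrow> P) \<Longrightarrow> P"
  unfolding BC by auto

lemma empty_F: "({} :: 'a list set) \<in> RevL TYPE(bit)"
proof -
  have "LF {} (\<lambda>_ (_::'a) _. False) (\<lambda>_. False) (\<lambda>_. False) = {}"
    unfolding LF_def by (auto simp: GR_def bruns_def)
  moreover have "brev {} (\<lambda>_ (_::'a) _. False)" by (simp add: brev_def)
  ultimately show ?thesis using FC_I[of "{}" "\<lambda>_ (_::'a) _. False" "\<lambda>_. False" "\<lambda>_. False"] by simp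
qed

lemma compl_RF: "(L :: 'a list set) \<in> RevL TYPE(bit) \<Longrightarrow> - L \<in> RevL TYPE(bit)"
proof -
  assume "L \<in> RevL TYPE(bit)"
  then obtain Q and T :: "nat \<Rightarrow> 'a \<Rightarrow> nat \<Rightarrow> bool" and I F where "finite Q" "brev Q T" "L = LF Q T I F"
    by (rule FC_E)
  moreover obtain Q' and T' :: "nat \<Rightarrow> 'a \<Rightarrow> nat \<Rightarrow> bool" and I' F' where "finite Q'" "brev Q' T'" "LF Q' T' I' F' = - LF Q T I F"
    using compl_F[OF \<open>finite Q\<close> \<open>brev Q T\<close>, of I F] by blast
  ultimately show ?thesis using FC_I[of Q' T' I' F'] by simp
qed

lemma int_RF: "(L1 :: 'a list set) \<in> RevL TYPE(bit) \<Longrightarrow> L2 \<in> RevL TYPE(bit) \<Longrightarrow> L1 \<inter> L2 \<in> RevL TYPE(bit)"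
proof -
  assume a1: "L1 \<in> RevL TYPE(bit)" and a2: "L2 \<in> RevL TYPE(bit)"
  obtain Q1 and T1 :: "nat \<Rightarrow> 'a \<Rightarrow> nat \<Rightarrow> bool" and I1 F1 where
    "finite Q1" "brev Q1 T1" "L1 = LF Q1 T1 I1 F1" using a1 by (rule FC_E)
  moreover obtain Q2 and T2 :: "nat \<Rightarrow> 'a \<Rightarrow> nat \<Rightarrow> bool" and I2 F2 where
    "finite Q2" "brev Q2 T2" "L2 = LF Q2 T2 I2 F2" using a2 by (rule FC_E)
  moreover obtain Q' and T' :: "nat \<Rightarrow> 'a \<Rightarrow> nat \<Rightarrow> bool" and I' F' where "finite Q'" "brev Q' T'" "LF Q' T' I' F' = LF Q1 T1 I1 F1 \<inter> LF Q2 T2 I2 F2"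
    using prod_F[OF \<open>finite Q1\<close> \<open>brev Q1 T1\<close> \<open>finite Q2\<close> \<open>brev Q2 T2\<close>, of I1 F1 I2 F2] by blast
  ultimately show ?thesis using FC_I[of Q' T' I' F'] by simp
qed

lemma univ_RF: "(UNIV :: 'a list set) \<in> RevL TYPE(bit)"
  using compl_RF[OF empty_F] by simp

lemma Inter_RF: "finite S \<Longrightarrow> S \<subseteq> (RevL TYPE(bit) :: 'a list set set) \<Longrightarrow> \<Inter>S \<in> RevL TYPE(bit)"
proof (induction S rule: finite_induct)
  case empty then show ?case using univ_RF by simp
next
  case (insert X S) then show ?case using int_RF[of X "\<Inter>S"] by simp
qed

lemma F_closed: "bool_closed (RevL TYPE(bit) :: 'a list set set)"
  unfolding bool_closed_def
proof (intro conjI allI impI ballI)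
  fix L :: "'a list set" assume "L \<in> RevL TYPE(bit)" then show "- L \<in> RevL TYPE(bit)" by (rule compl_RF)
next
  fix S :: "'a list set set" assume a: "finite S \<and> S \<subseteq> RevL TYPE(bit)"
  then show "\<Inter>S \<in> RevL TYPE(bit)" using Inter_RF by blast
next
  fix S :: "'a list set set" assume a: "finite S \<and> S \<subseteq> RevL TYPE(bit)"
  have "uminus ` S \<subseteq> RevL TYPE(bit)" using a compl_RF by blast
  then have "\<Inter>(uminus ` S) \<in> RevL TYPE(bit)" using Inter_RF a by blast
  then have "- \<Inter>(uminus ` S) \<in> RevL TYPE(bit)" by (rule compl_RF)
  moreover have "- \<Inter>(uminus ` S) = \<Union>S" by auto
  ultimately show "\<Union>S \<in> RevL TYPE(bit)" by simp
qed

theorem theorem1: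
  "RevL TYPE(bit) = bool_closure (RevL TYPE(boolsr) :: ('a::finite) list set set)"
proof
  show "RevL TYPE(bit) \<subseteq> bool_closure (RevL TYPE(boolsr) :: ('a::finite) list set set)"
  proof
    fix L :: "'a list set" assume "L \<in> RevL TYPE(bit)"
    then obtain Q and T :: "nat \<Rightarrow> 'a \<Rightarrow> nat \<Rightarrow> bool" and I F where fQ: "finite Q" and r: "brev Q T"
      and L: "L = LF Q T I F"
      by (rule FC_E)
    have "\<forall>q\<in>{q\<in>Q. I q}. LB Q T (\<lambda>x. x = q) F \<in> bool_closure (RevL TYPE(boolsr))"
    proof
      fix q assume "q \<in> {q\<in>Q. I q}"
      have "LB Q T (\<lambda>x. x = q) F \<in> RevL TYPE(boolsr)" using fQ r by (rule BC_I)
      then show "LB Q T (\<lambda>x. x = q) F \<in> bool_closure (RevL TYPE(boolsr))" using closure_sup by blast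
    qed
    from bc_par[OF closure_closed _ this] fQ
    show "L \<in> bool_closure (RevL TYPE(boolsr))" unfolding L LF_parity[OF r fQ] by simp
  qed
next
  have "RevL TYPE(boolsr) \<subseteq> (RevL TYPE(bit) :: 'a list set set)"
  proof
    fix L :: "'a list set" assume "L \<in> RevL TYPE(boolsr)"
    then obtain Q and T :: "nat \<Rightarrow> 'a \<Rightarrow> nat \<Rightarrow> bool" and I F where fQ: "finite Q" and r: "brev Q T"
      and L: "L = LB Q T I F"
      by (rule BC_E)
    have "(\<lambda>q. LF Q T (\<lambda>x. x = q) F) ` {q\<in>Q. I q} \<subseteq> RevL TYPE(bit)"
      using FC_I[OF fQ r] by blast
    then have "\<Union>((\<lambda>q. LF Q T (\<lambda>x. x = q) F) ` {q\<in>Q. I q}) \<in> RevL TYPE(bit)"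
      using bc_parts(2)[OF F_closed, of "(\<lambda>q. LF Q T (\<lambda>x. x = q) F) ` {q\<in>Q. I q}"] fQ by simp
    then show "L \<in> RevL TYPE(bit)" unfolding L LB_union[OF r] .
  qed
  then show "bool_closure (RevL TYPE(boolsr) :: ('a::finite) list set set) \<subseteq> RevL TYPE(bit)"
    by (rule closure_min[OF _ F_closed])
qed


end
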